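(* The Dedekind reals ${\mathbf{R}_\mathbf{D}}$, with the premetric $x\sim_\varepsilon y:=|x-y|<\varepsilon$ and the maps $\mathsf{rat}:\mathbf{Q}\to{\mathbf{R}_\mathbf{D}}$ and $\lim:\mathcal{C}_{{\mathbf{R}_\mathbf{D}}}\to{\mathbf{R}_\mathbf{D}}$ defined below, can be completed to a Cauchy structure; that is, there is $\mathsf{eq}:\prod_{u,v:{\mathbf{R}_\mathbf{D}}}(\forall(\varepsilon:\mathbf{Q}_+).u\sim_\varepsilon v)\to u=v$, and the following hold: (i) for $q,r:\mathbf{Q}$, $\varepsilon:\mathbf{Q}_+$, if $-\varepsilon<q-r<\varepsilon$ then $\mathsf{rat}(q)\sim_\varepsilon\mathsf{rat}(r)$; (ii) for $q:\mathbf{Q}$, $y:\mathcal{C}_{{\mathbf{R}_\mathbf{D}}}$, $\varepsilon,\delta:\mathbf{Q}_+$, if $\mathsf{rat}(q)\sim_\varepsilon y_\delta$ then $\mathsf{rat}(q)\sim_{\varepsilon+\delta}\lim(y)$; (iii) for $x:\mathcal{C}_{{\mathbf{R}_\mathbf{D}}}$, $r:\mathbf{Q}$, $\varepsilon,\delta:\mathbf{Q}_+$, if $x_\delta\sim_\varepsilon\mathsf{rat}(r)$ then $\lim(x)\sim_{\varepsilon+\delta}\mathsf{rat}(r)$; (iv) for $x,y:\mathcal{C}_{{\mathbf{R}_\mathbf{D}}}$, $\varepsilon,\delta,\eta:\mathbf{Q}_+$, if $x_\delta\sim_\varepsilon y_\eta$ then $\lim(x)\sim_{\varepsilon+\delt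a+\eta}\lim(y)$.
   Context: Work in univalent type theory with propositional truncation and function extensionality; $\Omega$ is the type of propositions, $\exists$ and $\vee$ are truncated. $\mathbf{Q}$ is the rationals, $\mathbf{Q}_+$ the positive rationals. For predicates $L,U:\mathbf{Q}\to\Omega$ and $x=(L,U)$ write $q<x$ for $L(q)$ and $x<r$ for $U(r)$. $x$ is a Dedekind cut if: (inhabited) $\exists q.\,q<x$ and $\exists r.\,x<r$; (rounded) $q<x\Leftrightarrow\exists q'.(q<q')\wedge(q'<x)$ and $x<r\Leftrightarrow\exists r'.(r'<r)\wedge(x<r')$; (transitive) $(q<x)\wedge(x<r)\Rightarrow q<r$; (located) $q<r\Rightarrow(q<x)\vee(x<r)$. ${\mathbf{R}_\mathbf{D}}$ is the type of Dedekind cuts. Define: $q<\mathsf{rat}(r):=q<r$, $\mathsf{rat}(q)<r:=q<r$; $q<x+y:=\exists s,t.(q=s+t)\wedge(s<x)\wedge(t<y)$, $x+y<r:=\exists s,t.(r=s+t)\wedge(x<s)\wedge(y<t)$; $q<-x:=x<-q$, $-x<r:=-r<x$; $x-y:=x+(-y)$; $x<y:=\exists q.(x<q)\wedge(q<y)$; $q<|x|:=(q<x)\vee(q<-x)$, $|x|<r:=(x<r)\wedge(-x<r)$; and $|x-y|<\varepsilon$ means $|x-y|<\mathsf{rat}(\varepsilon)$, i.e. $\varepsilon$ is in the upper cut of $|x-y|$. A Cauchy approximation in ${\mathbf{R}_\mathbf{D}}$ is $x:\mathbf{Q}_+\to{\mathbf{R}_\mathbf{D}}$ with $\forall\delta,\varepsilon.\,x_\delta\sim_{\delta+\varepsilon}x_\varepsilon$;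 $\mathcal{C}_{{\mathbf{R}_\mathbf{D}}}$ is their type. For $x:\mathcal{C}_{{\mathbf{R}_\mathbf{D}}}$, $\lim(x)$ is the Dedekind cut with $q<\lim(x):=\exists(\varepsilon,\theta:\mathbf{Q}_+).\,q+\varepsilon+\theta<x_\varepsilon$ and $\lim(x)<r:=\exists(\varepsilon,\theta:\mathbf{Q}_+).\,x_\varepsilon<r-\varepsilon-\theta$ (here $q<x_\varepsilon$, $x_\varepsilon<r$ refer to the cut of $x_\varepsilon$). *)

theory Defs
  imports Complex_Main
begin

text \<open>A pre-cut is a pair (L, U) of predicates on the rationals;
  q < x means L q, x < r means U r.\<close>
type_synonym cut = "(rat \<Rightarrow> bool) \<times> (rat \<Rightarrow> bool)"

definition lowerD :: "cut \<Rightarrow> rat \<Rightarrow> bool" where "lowerD x q = fst x q"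
definition upperD :: "cut \<Rightarrow> rat \<Rightarrow> bool" where "upperD x r = snd x r"

definition is_cut :: "cut \<Rightarrow> bool" where
  "is_cut x \<longleftrightarrow>
     (\<exists>q. lowerD x q) \<and> (\<exists>r. upperD x r) \<and>
     (\<forall>q. lowerD x q \<longleftrightarrow> (\<exists>q'. q < q' \<and> lowerD x q')) \<and>
     (\<forall>r. upperD x r \<longleftrightarrow> (\<exists>r'. r' < r \<and> upperD x r')) \<and>
     (\<forall>q r. lowerD x q \<and> upperD x r \<longrightarrow> q < r) \<and>
     (\<forall>q r. q < r \<longrightarrow> lowerD x q \<or> upperD x r)"

definition ratD :: "rat \<Rightarrow> cut" where
  "ratD s = ((\<lambda>q. q < s), (\<lambda>r. s < r))"

definition addD :: "cut \<Rightarrow> cut \<Rightarrow> cut" where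
  "addD x y = ((\<lambda>q. \<exists>s t. q = s + t \<and> lowerD x s \<and> lowerD y t),
               (\<lambda>r. \<exists>s t. r = s + t \<and> upperD x s \<and> upperD y t))"

definition negD :: "cut \<Rightarrow> cut" where
  "negD x = ((\<lambda>q. upperD x (- q)), (\<lambda>r. lowerD x (- r)))"

definition absD :: "cut \<Rightarrow> cut" where
  "absD x = ((\<lambda>q. lowerD x q \<or> lowerD (negD x) q),
             (\<lambda>r. upperD x r \<and> upperD (negD x) r))"

text \<open>Premetric: x ~_eps y iff |x - y| < rat eps, i.e. eps lies in the upper cut of |x - y|.\<close>
definition closeD :: "rat \<Rightarrow> cut \<Rightarrow> cut \<Rightarrow> bool" where
  "closeD eps x y \<longleftrightarrow> upperD (absD (addD x (negD y))) eps"

text \<open>Cauchy approximations: x : Q_+ -> R_D (values at non-positive arguments are irrelevant).\<close>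
definition cauchy_approx :: "(rat \<Rightarrow> cut) \<Rightarrow> bool" where
  "cauchy_approx x \<longleftrightarrow> (\<forall>d>0. is_cut (x d)) \<and>
     (\<forall>d>0. \<forall>e>0. closeD (d + e) (x d) (x e))"

definition limD :: "(rat \<Rightarrow> cut) \<Rightarrow> cut" where
  "limD x = ((\<lambda>q. \<exists>e>0. \<exists>th>0. lowerD (x e) (q + e + th)),
             (\<lambda>r. \<exists>e>0. \<exists>th>0. upperD (x e) (r - e - th)))"

end

theory Submission
  imports Defs
begin

lemma lowerD_lim: "lowerD (limD x) q \<longleftrightarrow> (\<exists>e>0. \<exists>th>0. lowerD (x e) (q + e + th))"
  by (simp add: limD_def lowerD_def)
lemma upperD_lim: "upperD (limD x) r \<longleftrightarrow> (\<exists>e>0. \<exists>th>0. upperD (x e) (r - e - th))"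
  by (simp add: limD_def upperD_def)
lemma lowerD_rat: "lowerD (ratD s) q \<longleftrightarrow> q < s" by (simp add: ratD_def lowerD_def)
lemma upperD_rat: "upperD (ratD s) q \<longleftrightarrow> s < q" by (simp add: ratD_def upperD_def)

lemma cut_L_down: "is_cut x \<Longrightarrow> lowerD x q' \<Longrightarrow> q < q' \<Longrightarrow> lowerD x q"
  unfolding is_cut_def by blast
lemma cut_L_up: "is_cut x \<Longrightarrow> lowerD x q \<Longrightarrow> \<exists>q'>q. lowerD x q'"
  unfolding is_cut_def by blast
lemma cut_U_up: "is_cut x \<Longrightarrow> upperD x r \<Longrightarrow> r < r' \<Longrightarrow> upperD x r'"
  unfolding is_cut_def by blast
lemma cut_U_down: "is_cut x \<Longrightarrow> upperD x r \<Longrightarrow> \<exists>r'<r. upperD x r'"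
  unfolding is_cut_def by blast
lemma cut_trans: "is_cut x \<Longrightarrow> lowerD x q \<Longrightarrow> upperD x r \<Longrightarrow> q < r"
  unfolding is_cut_def by blast
lemma cut_loc: "is_cut x \<Longrightarrow> q < r \<Longrightarrow> lowerD x q \<or> upperD x r"
  unfolding is_cut_def by blast
lemma cut_inh: "is_cut x \<Longrightarrow> (\<exists>q. lowerD x q) \<and> (\<exists>r. upperD x r)"
  unfolding is_cut_def by blast

lemma closeD_unf: "closeD e x y \<longleftrightarrow>
   (\<exists>s t. e = s + t \<and> upperD x s \<and> lowerD y (-t)) \<and>
   (\<exists>s t. -e = s + t \<and> lowerD x s \<and> upperD y (-t))"
  unfolding closeD_def absD_def addD_def negD_def
  by (simp add: upperD_def lowerD_def)

lemma close_iff: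
  assumes x: "is_cut x" and y: "is_cut y"
  shows "closeD e x y \<longleftrightarrow> (\<exists>a b. upperD x a \<and> lowerD y b \<and> a - b < e) \<and>
            (\<exists>a b. lowerD x a \<and> upperD y b \<and> b - a < e)"
proof
  assume "closeD e x y"
  then obtain s t s2 t2 where h: "e = s + t" "upperD x s" "lowerD y (-t)"
    "-e = s2 + t2" "lowerD x s2" "upperD y (-t2)"
    unfolding closeD_unf by blast
  obtain s' where s': "s' < s" "upperD x s'" using cut_U_down[OF x h(2)] by blast
  obtain s2' where s2': "s2' > s2" "lowerD x s2'" using cut_L_up[OF x h(5)] by blast
  have "upperD x s' \<and> lowerD y (-t) \<and> s' - (-t) < e" using s' h by simp
  moreover have "lowerD x s2' \<and> upperD y (-t2) \<and> (-t2) - s2' < e" using s2' h by simp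
  ultimately show "(\<exists>a b. upperD x a \<and> lowerD y b \<and> a - b < e) \<and>
            (\<exists>a b. lowerD x a \<and> upperD y b \<and> b - a < e)" by blast
next
  assume "(\<exists>a b. upperD x a \<and> lowerD y b \<and> a - b < e) \<and>
            (\<exists>a b. lowerD x a \<and> upperD y b \<and> b - a < e)"
  then obtain a b a2 b2 where h: "upperD x a" "lowerD y b" "a - b < e"
    "lowerD x a2" "upperD y b2" "b2 - a2 < e" by blast
  have 1: "upperD x (b + e)" using cut_U_up[OF x h(1)] h(3) by simp
  have 2: "lowerD x (b2 - e)" using cut_L_down[OF x h(4)] h(6) by simp
  have "e = (b + e) + (-b) \<and> upperD x (b + e) \<and> lowerD y (-(-b))" using 1 h by simp
  moreover have "-e = (b2 - e) + (-b2) \<and> lowerD x (b2 - e) \<and> upperD y (-(-b2))" using 2 h by simp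
  ultimately show "closeD e x y" unfolding closeD_unf by blast
qed

lemma rat_cut: "is_cut (ratD q)"
  unfolding is_cut_def lowerD_rat upperD_rat
proof (intro conjI allI iffI impI)
  show "\<exists>x. x < q" using lt_ex by blast
  show "\<exists>x. q < x" using gt_ex by blast
  fix a b
  show "a < q \<Longrightarrow> \<exists>q'. a < q' \<and> q' < q" using dense by blast
  show "\<exists>q'. a < q' \<and> q' < q \<Longrightarrow> a < q" by auto
  show "q < a \<Longrightarrow> \<exists>r'. r' < a \<and> q < r'" using dense by blast
  show "\<exists>r'. r' < a \<and> q < r' \<Longrightarrow> q < a" by auto
  show "a < q \<and> q < b \<Longrightarrow> a < b" by auto
  show "a < b \<Longrightarrow> a < q \<or> q < b" by auto
qed

lemma lim_cut:
  assumes c: "cauchy_approx x"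
  shows "is_cut (limD x)"
proof -
  have xc: "\<And>d. d > 0 \<Longrightarrow> is_cut (x d)" using c unfolding cauchy_approx_def by blast
  have cl: "\<And>d e. d > 0 \<Longrightarrow> e > 0 \<Longrightarrow> closeD (d + e) (x d) (x e)"
    using c unfolding cauchy_approx_def by blast
  have i1: "\<exists>q. lowerD (limD x) q"
  proof -
    obtain q where "lowerD (x 1) q" using cut_inh[OF xc[of 1]] by auto
    then have "lowerD (x 1) ((q - 2) + 1 + 1)" by simp
    then show ?thesis unfolding lowerD_lim by (meson zero_less_one)
  qed
  have i2: "\<exists>r. upperD (limD x) r"
  proof -
    obtain r where "upperD (x 1) r" using cut_inh[OF xc[of 1]] by auto
    then have "upperD (x 1) ((r + 2) - 1 - 1)" by simp
    then show ?thesis unfolding upperD_lim by (meson zero_less_one)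
  qed
  have r1: "lowerD (limD x) q \<longleftrightarrow> (\<exists>q'. q < q' \<and> lowerD (limD x) q')" for q
  proof
    assume "lowerD (limD x) q"
    then obtain e th where h: "e > 0" "th > 0" "lowerD (x e) (q + e + th)"
      unfolding lowerD_lim by blast
    have eq: "(q + th/2) + e + th/2 = q + e + th" by simp
    have "lowerD (x e) ((q + th/2) + e + th/2)" using h(3) by (simp only: eq)
    then have "lowerD (limD x) (q + th/2)" unfolding lowerD_lim using h(1) half_gt_zero[OF h(2)] by blast
    then show "\<exists>q'. q < q' \<and> lowerD (limD x) q'" using h(2) by (intro exI[of _ "q + th/2"]) simp
  next
    assume "\<exists>q'. q < q' \<and> lowerD (limD x) q'"
    then obtain q' e th where h: "q < q'" "e > 0" "th > 0" "lowerD (x e) (q' + e + th)"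
      unfolding lowerD_lim by blast
    have "lowerD (x e) (q + e + (th + (q' - q)))" using h(4) by (simp add: algebra_simps)
    then show "lowerD (limD x) q" unfolding lowerD_lim using h by (meson add_pos_pos diff_gt_0_iff_gt)
  qed
  have r2: "upperD (limD x) r \<longleftrightarrow> (\<exists>r'. r' < r \<and> upperD (limD x) r')" for r
  proof
    assume "upperD (limD x) r"
    then obtain e th where h: "e > 0" "th > 0" "upperD (x e) (r - e - th)"
      unfolding upperD_lim by blast
    have eq: "(r - th/2) - e - th/2 = r - e - th" by simp
    have "upperD (x e) ((r - th/2) - e - th/2)" using h(3) by (simp only: eq)
    then have "upperD (limD x) (r - th/2)" unfolding upperD_lim using h(1) half_gt_zero[OF h(2)] by blast
    then show "\<exists>r'. r' < r \<and> upperD (limD x) r'" using h(2) by (intro exI[of _ "r - th/2"]) simp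
  next
    assume "\<exists>r'. r' < r \<and> upperD (limD x) r'"
    then obtain r' e th where h: "r' < r" "e > 0" "th > 0" "upperD (x e) (r' - e - th)"
      unfolding upperD_lim by blast
    have "upperD (x e) (r - e - (th + (r - r')))" using h(4) by (simp add: algebra_simps)
    then show "upperD (limD x) r" unfolding upperD_lim using h by (meson add_pos_pos diff_gt_0_iff_gt)
  qed
  have tr: "q < r" if hlr: "lowerD (limD x) q" "upperD (limD x) r" for q r
  proof -
    obtain e th where h: "e > 0" "th > 0" "lowerD (x e) (q + e + th)"
      using hlr(1) unfolding lowerD_lim by blast
    obtain d th' where g: "d > 0" "th' > 0" "upperD (x d) (r - d - th')"
      using hlr(2) unfolding upperD_lim by blast
    obtain a b where ab: "upperD (x e) a" "lowerD (x d) b" "a - b < e + d"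
      using cl[OF h(1) g(1)] close_iff[OF xc[OF h(1)] xc[OF g(1)]] by blast
    have "q + e + th < a" using cut_trans[OF xc[OF h(1)] h(3) ab(1)] .
    moreover have "b < r - d - th'" using cut_trans[OF xc[OF g(1)] ab(2) g(3)] .
    ultimately show ?thesis using ab(3) h(2) g(2) by linarith
  qed
  have lo: "lowerD (limD x) q \<or> upperD (limD x) r" if "q < r" for q r
  proof -
    define ep where "ep = (r - q) / 5"
    have ep: "ep > 0" using that by (simp add: ep_def)
    have "q + ep + ep < r - ep - ep" using that by (simp add: ep_def field_simps)
    then have "lowerD (x ep) (q + ep + ep) \<or> upperD (x ep) (r - ep - ep)"
      using cut_loc[OF xc[OF ep]] by blast
    then show ?thesis unfolding lowerD_lim upperD_lim using ep by blast
  qed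
  show ?thesis unfolding is_cut_def using i1 i2 r1 r2 tr lo by blast
qed

lemma close_eq:
  assumes u: "is_cut u" and v: "is_cut v" and h: "\<forall>e>0. closeD e u v"
  shows "u = v"
proof -
  have c: "\<And>e. e > 0 \<Longrightarrow> (\<exists>a b. upperD u a \<and> lowerD v b \<and> a - b < e) \<and>
            (\<exists>a b. lowerD u a \<and> upperD v b \<and> b - a < e)"
    using h close_iff[OF u v] by blast
  have L: "lowerD u q \<longleftrightarrow> lowerD v q" for q
  proof
    assume "lowerD u q"
    then obtain q' where q': "q' > q" "lowerD u q'" using cut_L_up[OF u] by blast
    then obtain a b where ab: "upperD u a" "lowerD v b" "a - b < q' - q" using c[of "q' - q"] by auto
    have "q' < a" using cut_trans[OF u q'(2) ab(1)] .
    then have "q < b" using ab(3) by linarith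
    then show "lowerD v q" using cut_L_down[OF v ab(2)] by blast
  next
    assume "lowerD v q"
    then obtain q' where q': "q' > q" "lowerD v q'" using cut_L_up[OF v] by blast
    then obtain a b where ab: "lowerD u a" "upperD v b" "b - a < q' - q" using c[of "q' - q"] by auto
    have "q' < b" using cut_trans[OF v q'(2) ab(2)] .
    then have "q < a" using ab(3) by linarith
    then show "lowerD u q" using cut_L_down[OF u ab(1)] by blast
  qed
  have U: "upperD u r \<longleftrightarrow> upperD v r" for r
  proof
    assume "upperD u r"
    then obtain r' where r': "r' < r" "upperD u r'" using cut_U_down[OF u] by blast
    then obtain a b where ab: "lowerD u a" "upperD v b" "b - a < r - r'" using c[of "r - r'"] by auto
    have "a < r'" using cut_trans[OF u ab(1) r'(2)] .
    then have "b < r" using ab(3) by linarith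
    then show "upperD v r" using cut_U_up[OF v ab(2)] by blast
  next
    assume "upperD v r"
    then obtain r' where r': "r' < r" "upperD v r'" using cut_U_down[OF v] by blast
    then obtain a b where ab: "upperD u a" "lowerD v b" "a - b < r - r'" using c[of "r - r'"] by auto
    have "b < r'" using cut_trans[OF v ab(2) r'(2)] .
    then have "a < r" using ab(3) by linarith
    then show "upperD u r" using cut_U_up[OF u ab(1)] by blast
  qed
  have "fst u = fst v" using L by (auto simp: lowerD_def)
  moreover have "snd u = snd v" using U by (auto simp: upperD_def)
  ultimately show ?thesis by (simp add: prod_eq_iff)
qed

lemma lim_L: "lowerD (y d) b \<Longrightarrow> d > 0 \<Longrightarrow> th > 0 \<Longrightarrow> lowerD (limD y) (b - d - th)"
  unfolding lowerD_lim by (intro exI[of _ d] conjI exI[of _ th]) auto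
lemma lim_U: "upperD (y d) b \<Longrightarrow> d > 0 \<Longrightarrow> th > 0 \<Longrightarrow> upperD (limD y) (b + d + th)"
  unfolding upperD_lim by (intro exI[of _ d] conjI exI[of _ th]) auto

theorem theorem2p23:
  shows "(\<forall>q. is_cut (ratD q))
    \<and> (\<forall>x. cauchy_approx x \<longrightarrow> is_cut (limD x))
    \<and> (\<forall>u v. is_cut u \<longrightarrow> is_cut v \<longrightarrow> (\<forall>e>0. closeD e u v) \<longrightarrow> u = v)
    \<and> (\<forall>q r e. e > 0 \<longrightarrow> - e < q - r \<longrightarrow> q - r < e \<longrightarrow> closeD e (ratD q) (ratD r))
    \<and> (\<forall>q y e d. cauchy_approx y \<longrightarrow> e > 0 \<longrightarrow> d > 0 \<longrightarrow>
          closeD e (ratD q) (y d) \<longrightarrow> closeD (e + d) (ratD q) (limD y))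
    \<and> (\<forall>x r e d. cauchy_approx x \<longrightarrow> e > 0 \<longrightarrow> d > 0 \<longrightarrow>
          closeD e (x d) (ratD r) \<longrightarrow> closeD (e + d) (limD x) (ratD r))
    \<and> (\<forall>x y e d n. cauchy_approx x \<longrightarrow> cauchy_approx y \<longrightarrow> e > 0 \<longrightarrow> d > 0 \<longrightarrow> n > 0 \<longrightarrow>
          closeD e (x d) (y n) \<longrightarrow> closeD (e + d + n) (limD x) (limD y))"
proof (intro conjI allI impI)
  fix q show "is_cut (ratD q)" by (rule rat_cut)
next
  fix x :: "rat \<Rightarrow> cut" assume "cauchy_approx x" then show "is_cut (limD x)" by (rule lim_cut)
next
  fix u v :: cut assume "is_cut u" "is_cut v" "\<forall>e>0. closeD e u v"
  then show "u = v" by (rule close_eq)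
next
  fix q r e :: rat assume h: "e > 0" "- e < q - r" "q - r < e"
  show "closeD e (ratD q) (ratD r)"
    unfolding close_iff[OF rat_cut rat_cut] lowerD_rat upperD_rat
  proof (intro conjI)
    define g where "g = (e - (q - r)) / 3"
    have "g > 0" "(q + g) - (r - g) < e" using h by (simp_all add: g_def field_simps)
    then show "\<exists>a b. q < a \<and> b < r \<and> a - b < e"
      by (intro exI[of _ "q + g"] exI[of _ "r - g"]) simp
    define g2 where "g2 = (e - (r - q)) / 3"
    have "g2 > 0" "(r + g2) - (q - g2) < e" using h by (simp_all add: g2_def field_simps)
    then show "\<exists>a b. a < q \<and> r < b \<and> b - a < e"
      by (intro exI[of _ "q - g2"] exI[of _ "r + g2"]) simp
  qed
next
  fix q y e d assume c: "cauchy_approx y" and h: "(e::rat) > 0" "(d::rat) > 0"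
    and cl: "closeD e (ratD q) (y d)"
  have yc: "is_cut (y d)" using c h unfolding cauchy_approx_def by blast
  obtain a b a2 b2 where g: "q < a" "lowerD (y d) b" "a - b < e" "a2 < q" "upperD (y d) b2" "b2 - a2 < e"
    using cl unfolding close_iff[OF rat_cut yc] lowerD_rat upperD_rat by blast
  define th where "th = (e - (a - b)) / 2"
  define th2 where "th2 = (e - (b2 - a2)) / 2"
  have th: "th > 0" "th2 > 0" using g by (auto simp: th_def th2_def)
  show "closeD (e + d) (ratD q) (limD y)"
    unfolding close_iff[OF rat_cut lim_cut[OF c]] lowerD_rat upperD_rat
  proof (intro conjI)
    show "\<exists>a b. q < a \<and> lowerD (limD y) b \<and> a - b < e + d"
      using g lim_L[of y d b th, OF g(2) h(2) th(1)] th unfolding th_def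
      by (intro exI[of _ a] exI[of _ "b - d - (e - (a - b)) / 2"]) (auto simp: field_simps)
    show "\<exists>a b. a < q \<and> upperD (limD y) b \<and> b - a < e + d"
      using g lim_U[of y d b2 th2, OF g(5) h(2) th(2)] th unfolding th2_def
      by (intro exI[of _ a2] exI[of _ "b2 + d + (e - (b2 - a2)) / 2"]) (auto simp: field_simps)
  qed
next
  fix x r e d assume c: "cauchy_approx x" and h: "(e::rat) > 0" "(d::rat) > 0"
    and cl: "closeD e (x d) (ratD r)"
  have xc: "is_cut (x d)" using c h unfolding cauchy_approx_def by blast
  obtain a b a2 b2 where g: "upperD (x d) a" "b < r" "a - b < e" "lowerD (x d) a2" "r < b2" "b2 - a2 < e"
    using cl unfolding close_iff[OF xc rat_cut] lowerD_rat upperD_rat by blast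
  define th where "th = (e - (a - b)) / 2"
  define th2 where "th2 = (e - (b2 - a2)) / 2"
  have th: "th > 0" "th2 > 0" using g by (auto simp: th_def th2_def)
  show "closeD (e + d) (limD x) (ratD r)"
    unfolding close_iff[OF lim_cut[OF c] rat_cut] lowerD_rat upperD_rat
  proof (intro conjI)
    show "\<exists>a b. upperD (limD x) a \<and> b < r \<and> a - b < e + d"
      using g lim_U[of x d a th, OF g(1) h(2) th(1)] th unfolding th_def
      by (intro exI[of _ "a + d + (e - (a - b)) / 2"] exI[of _ b]) (auto simp: field_simps)
    show "\<exists>a b. lowerD (limD x) a \<and> r < b \<and> b - a < e + d"
      using g lim_L[of x d a2 th2, OF g(4) h(2) th(2)] th unfolding th2_def
      by (intro exI[of _ "a2 - d - (e - (b2 - a2)) / 2"] exI[of _ b2]) (auto simp: field_simps)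
  qed
next
  fix x y e d n assume cx: "cauchy_approx x" and cy: "cauchy_approx y"
    and h: "(e::rat) > 0" "(d::rat) > 0" "(n::rat) > 0"
    and cl: "closeD e (x d) (y n)"
  have xc: "is_cut (x d)" using cx h unfolding cauchy_approx_def by blast
  have yc: "is_cut (y n)" using cy h unfolding cauchy_approx_def by blast
  obtain a b a2 b2 where g: "upperD (x d) a" "lowerD (y n) b" "a - b < e"
    "lowerD (x d) a2" "upperD (y n) b2" "b2 - a2 < e"
    using cl unfolding close_iff[OF xc yc] by blast
  define th where "th = (e - (a - b)) / 4"
  define th2 where "th2 = (e - (b2 - a2)) / 4"
  have th: "th > 0" "th2 > 0" using g by (auto simp: th_def th2_def)
  show "closeD (e + d + n) (limD x) (limD y)"
    unfolding close_iff[OF lim_cut[OF cx] lim_cut[OF cy]]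
  proof (intro conjI)
    have "(a + d + th) - (b - n - th) < e + d + n" using g by (simp add: th_def field_simps)
    then show "\<exists>a b. upperD (limD x) a \<and> lowerD (limD y) b \<and> a - b < e + d + n"
      using lim_U[of x d a th, OF g(1) h(2) th(1)] lim_L[of y n b th, OF g(2) h(3) th(1)] by blast
    have "(b2 + n + th2) - (a2 - d - th2) < e + d + n" using g by (simp add: th2_def field_simps)
    then show "\<exists>a b. lowerD (limD x) a \<and> upperD (limD y) b \<and> b - a < e + d + n"
      using lim_L[of x d a2 th2, OF g(4) h(2) th(2)] lim_U[of y n b2 th2, OF g(5) h(3) th(2)] by blast
  qed
qed

end
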